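(* Let $f\in\mathcal{CM}$ with representing measure $\nu$, and let $f_e:(\omega_0,\infty)\to\mathbb{R}$ be its extension. Then $f_e\in C^\infty(\omega_0,\infty)$, and for all $m\in\mathbb{N}\cup\{0\}$ and all $\lambda>\omega_0$: \[ (-1)^m f_e^{(m)}(\lambda)\ge0\quad\text{and}\quad f_e^{(m)}(\lambda)=(-1)^m\int_{[0,\infty)}t^m e^{-\lambda t}\,\nu(dt). \] In particular $f_e(\lambda)=\int_{[0,\infty)}e^{-\lambda t}\nu(dt)$ for all $\lambda>\omega_0$.
   Context: A function $f:(0,\infty)\to\mathbb{R}$ is completely monotone, $f\in\mathcal{CM}$, if it is $C^\infty$ and $(-1)^n f^{(n)}(\lambda)\ge0$ for all $n\ge0$, $\lambda>0$; its representing measure is the unique measure $\nu$ on $[0,\infty)$ with $f(\lambda)=\int_{[0,\infty)}e^{-\lambda t}\nu(dt)$. For $n\ge0$, $f^{(n)}(0+):=\lim_{\lambda\to0+}f^{(n)}(\lambda)\in[-\infty,\infty]$. If all $f^{(n)}(0+)$ are finite, $\omega_0=\omega_0^f:=\inf\{\lambda\in\mathbb{R}:\sum_{n\ge0}\frac{f^{(n)}(0+)}{n!}\lambda^n\text{ converges}\}$; otherwise $\omega_0:=0$. The extension $f_e:(\omega_0,\infty)\to\mathbb{R}$ is $f_e(\lambda)=\sum_{n\ge0}\frac{f^{(n)}(0+)}{n!}\lambda^n$ for $\omega_0<\lambda\le0$ and $f_e(\lambda)=f(\lambda)$ for $\lambda>0$. *)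

theory Defs
  imports "HOL-Analysis.Analysis"
begin

definition smooth_on :: "real set \<Rightarrow> (real \<Rightarrow> real) \<Rightarrow> bool" where
  "smooth_on S f \<longleftrightarrow> (\<forall>n. \<forall>x\<in>S. ((deriv ^^ n) f) differentiable (at x))"

definition completely_monotone :: "(real \<Rightarrow> real) \<Rightarrow> bool" where
  "completely_monotone f \<longleftrightarrow> smooth_on {0<..} f \<and>
     (\<forall>n. \<forall>x>0. (-1) ^ n * (deriv ^^ n) f x \<ge> 0)"

definition representing_measure :: "(real \<Rightarrow> real) \<Rightarrow> real measure \<Rightarrow> bool" where
  "representing_measure f nu \<longleftrightarrow>
     space nu = {0..} \<and> sets nu = sets (restrict_space borel {0..}) \<and>
     (\<forall>lam>0. (\<integral>\<^sup>+ t. ennreal (exp (- lam * t)) \<partial>nu) = ennreal (f lam))"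

definition deriv0_finite :: "(real \<Rightarrow> real) \<Rightarrow> nat \<Rightarrow> bool" where
  "deriv0_finite f n \<longleftrightarrow> (\<exists>L::real. (((deriv ^^ n) f) \<longlongrightarrow> L) (at_right 0))"

definition deriv0 :: "(real \<Rightarrow> real) \<Rightarrow> nat \<Rightarrow> real" where
  "deriv0 f n = Lim (at_right 0) ((deriv ^^ n) f)"

text \<open>omega_0 as an extended real (it can be -infinity).\<close>
definition omega0 :: "(real \<Rightarrow> real) \<Rightarrow> ereal" where
  "omega0 f = (if (\<forall>n. deriv0_finite f n)
      then Inf (ereal ` {lam::real. summable (\<lambda>n. deriv0 f n / fact n * lam ^ n)})
      else 0)"

definition ext_fun :: "(real \<Rightarrow> real) \<Rightarrow> real \<Rightarrow> real" where
  "ext_fun f lam = (if lam > 0 then f lam else (\<Sum>n. deriv0 f n / fact n * lam ^ n))"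

end

theory Submission
  imports Defs
begin


lemma exp_bound: "0 \<le> (x::real) \<Longrightarrow> x^n / fact n \<le> exp x"
proof -
  assume x: "0 \<le> x"
  have s: "summable (\<lambda>n. x^n / fact n)"
    using exp_converges[of x] by (simp add: sums_iff divide_inverse mult.commute)
  have "sum (\<lambda>n. x^n / fact n) {n} \<le> (\<Sum>n. x^n / fact n)"
    by (rule sum_le_suminf[OF s]) (use x in auto)
  moreover have "(\<Sum>n. x^n / fact n) = exp x"
    using exp_converges[of x] by (simp add: sums_iff divide_inverse mult.commute)
  ultimately show ?thesis by simp
qed

lemma pow_exp_bound:
  assumes t: "0 \<le> (t::real)" and c: "0 < c"
  shows "t^n * exp(-c*t) \<le> fact n / c^n"
proof -
  have "(c*t)^n / fact n \<le> exp (c*t)" using t c by (intro exp_bound) simp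
  hence "c^n * t^n \<le> fact n * exp (c*t)" by (simp add: field_simps power_mult_distrib)
  hence "c^n * t^n * exp(-c*t) \<le> fact n * exp (c*t) * exp(-c*t)"
    by (intro mult_right_mono) auto
  also have "\<dots> = fact n" by (simp add: mult.assoc flip: exp_add)
  finally have "c^n * (t^n * exp(-c*t)) \<le> fact n" by (simp add: mult.assoc)
  thus ?thesis using c by (simp add: field_simps)
qed

lemma exp_diff_bound:
  assumes t: "0 \<le> (t::real)" and "b \<le> x" "b \<le> y"
  shows "\<bar>exp(-x*t) - exp(-y*t)\<bar> \<le> t * exp(-b*t) * \<bar>x - y\<bar>"
proof -
  have main: "\<bar>exp(-x*t) - exp(-y*t)\<bar> \<le> t * exp(-b*t) * \<bar>x - y\<bar>"
    if xy: "x \<le> y" "b \<le> x" for x y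
  proof -
    have e: "exp(-y*t) = exp(-x*t) * exp(-((y-x)*t))" by (simp add: algebra_simps flip: exp_add)
    have u: "1 - exp(-((y-x)*t)) \<le> (y-x)*t" using exp_ge_add_one_self[of "-((y-x)*t)"] by simp
    have u0: "0 \<le> 1 - exp(-((y-x)*t))" using xy t by simp
    have ex: "exp(-x*t) \<le> exp(-b*t)" using xy t by (simp add: mult_right_mono)
    have "\<bar>exp(-x*t) - exp(-y*t)\<bar> = exp(-x*t) * (1 - exp(-((y-x)*t)))"
      using u0 unfolding e by (simp add: algebra_simps)
    also have "\<dots> \<le> exp(-b*t) * ((y-x)*t)" by (intro mult_mono ex u u0) auto
    finally show ?thesis using xy by (simp add: algebra_simps)
  qed
  show ?thesis
  proof (cases "x \<le> y")
    case True then show ?thesis using main assms by auto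
  next
    case False then show ?thesis using main[of y x] assms by (auto simp: abs_minus_commute)
  qed
qed

locale lapl = fixes nu :: "real measure"
  assumes sp: "space nu = {0..}" and st: "sets nu = sets (restrict_space borel {0..})"
begin

lemma meas: "g \<in> borel_measurable borel \<Longrightarrow> g \<in> borel_measurable nu"
  using measurable_cong_sets[OF st refl] measurable_restrict_space1 by blast

lemma AEnn: "AE t in nu. 0 \<le> t" by (rule AE_I2) (simp add: sp)

definition Dom where "Dom = {l. integrable nu (\<lambda>t. exp (- l * t))}"
definition G where "G m l = (\<integral>t. t ^ m * exp (- l * t) \<partial>nu)"

lemma integ_mono: assumes "a \<in> Dom" "a \<le> l" shows "l \<in> Dom"
proof -
  have "integrable nu (\<lambda>t. exp (- l * t))"
  proof (rule Bochner_Integration.integrable_bound)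
    show "integrable nu (\<lambda>t. exp (- a * t))" using assms by (simp add: Dom_def)
    show "(\<lambda>t. exp (- l * t)) \<in> borel_measurable nu" by (intro meas) measurable
    show "AE t in nu. norm (exp (- l * t)) \<le> norm (exp (- a * t))"
      using AEnn by eventually_elim (use assms in \<open>auto intro: mult_right_mono\<close>)
  qed
  thus ?thesis by (simp add: Dom_def)
qed

lemma integ_pow: assumes "a \<in> Dom" "a < l" shows "integrable nu (\<lambda>t. t ^ m * exp (- l * t))"
proof (rule Bochner_Integration.integrable_bound)
  show "integrable nu (\<lambda>t. fact m / (l - a) ^ m * exp (- a * t))"
    using assms by (intro integrable_mult_right) (simp add: Dom_def)
  show "(\<lambda>t. t ^ m * exp (- l * t)) \<in> borel_measurable nu" by (intro meas) measurable
  show "AE t in nu. norm (t ^ m * exp (- l * t)) \<le> norm (fact m / (l - a) ^ m * exp (- a * t))"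
    using AEnn
  proof eventually_elim
    case (elim t)
    have "t ^ m * exp (- (l-a) * t) \<le> fact m / (l - a) ^ m"
      using elim assms by (intro pow_exp_bound) auto
    hence "t ^ m * exp (- (l-a) * t) * exp (- a * t) \<le> fact m / (l - a) ^ m * exp (- a * t)"
      by (intro mult_right_mono) auto
    moreover have "exp (- (l-a) * t) * exp (- a * t) = exp (- l * t)"
      by (simp add: algebra_simps flip: exp_add)
    ultimately have "t ^ m * exp (- l * t) \<le> fact m / (l - a) ^ m * exp (- a * t)"
      by (simp add: mult.assoc)
    thus ?case using elim assms by simp
  qed
qed

lemma deriv_G:
  assumes aD: "a \<in> Dom" and al: "a < l"
  shows "(G m has_real_derivative - G (Suc m) l) (at l)"
proof -
  define d where "d = (l - a) / 2"
  define b where "b = l - d"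
  have d0: "0 < d" and ab: "a < b" using al by (auto simp: d_def b_def field_simps)
  define S where "S = ball l d"
  have oS: "open S" and lS: "l \<in> S" using d0 by (auto simp: S_def)
  have "((\<lambda>y. (G m y - G m l) / (y - l)) \<longlongrightarrow> - G (Suc m) l) (at l within S)"
    unfolding tendsto_at_iff_sequentially comp_def
  proof (intro allI impI)
    fix X :: "nat \<Rightarrow> real" assume XS: "\<forall>i. X i \<in> S - {l}" and Xl: "X \<longlonglongrightarrow> l"
    have Xb: "b < X i" for i
    proof -
      have "dist l (X i) < d" using XS by (auto simp: S_def)
      thus ?thesis unfolding b_def dist_real_def by linarith
    qed
    have Xne: "X i \<noteq> l" for i using XS by auto
    define q where "q i t = (t ^ m * exp (- X i * t) - t ^ m * exp (- l * t)) / (X i - l)" for i t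
    have iX: "integrable nu (\<lambda>t. t ^ m * exp (- X i * t))" for i
      using integ_pow[OF aD, of "X i"] ab Xb[of i] by auto
    have il: "integrable nu (\<lambda>t. t ^ m * exp (- l * t))" using integ_pow[OF aD al] .
    have eq: "(G m (X i) - G m l) / (X i - l) = integral\<^sup>L nu (q i)" for i
      unfolding q_def G_def integral_divide_zero Bochner_Integration.integral_diff[OF iX il] ..
    have "(\<lambda>i. integral\<^sup>L nu (q i)) \<longlonglongrightarrow> integral\<^sup>L nu (\<lambda>t. - (t ^ Suc m * exp (- l * t)))"
    proof (rule integral_dominated_convergence[where w="\<lambda>t. t ^ Suc m * exp (- b * t)"])
      show "(\<lambda>t. - (t ^ Suc m * exp (- l * t))) \<in> borel_measurable nu" by (intro meas) measurable
      show "q i \<in> borel_measurable nu" for i unfolding q_def by (intro meas) measurable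
      show "integrable nu (\<lambda>t. t ^ Suc m * exp (- b * t))" using integ_pow[OF aD ab] .
      show "AE t in nu. (\<lambda>i. q i t) \<longlonglongrightarrow> - (t ^ Suc m * exp (- l * t))"
      proof (rule AE_I2)
        fix t :: real
        have "((\<lambda>y. t ^ m * exp (- y * t)) has_real_derivative t ^ m * (exp (- l * t) * (- t))) (at l)"
          by (auto intro!: derivative_eq_intros)
        hence "((\<lambda>y. (t ^ m * exp (- y * t) - t ^ m * exp (- l * t)) / (y - l)) \<longlongrightarrow> t ^ m * (exp (- l * t) * (- t))) (at l within UNIV)"
          unfolding has_field_derivative_iff by simp
        hence "(\<lambda>i. (t ^ m * exp (- X i * t) - t ^ m * exp (- l * t)) / (X i - l)) \<longlonglongrightarrow> t ^ m * (exp (- l * t) * (- t))"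
          unfolding tendsto_at_iff_sequentially comp_def using Xne Xl by auto
        thus "(\<lambda>i. q i t) \<longlonglongrightarrow> - (t ^ Suc m * exp (- l * t))"
          unfolding q_def by (simp add: algebra_simps)
      qed
      show "AE t in nu. norm (q i t) \<le> t ^ Suc m * exp (- b * t)" for i
        using AEnn
      proof eventually_elim
        case (elim t)
        have "\<bar>exp (- X i * t) - exp (- l * t)\<bar> \<le> t * exp (- b * t) * \<bar>X i - l\<bar>"
          using elim Xb[of i] d0 by (intro exp_diff_bound) (auto simp: b_def)
        hence "t ^ m * \<bar>exp (- X i * t) - exp (- l * t)\<bar> \<le> t ^ m * (t * exp (- b * t) * \<bar>X i - l\<bar>)"
          using elim by (intro mult_left_mono) auto
        moreover have "norm (q i t) = t ^ m * \<bar>exp (- X i * t) - exp (- l * t)\<bar> / \<bar>X i - l\<bar>"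
          using elim unfolding q_def by (simp add: abs_mult right_diff_distrib[symmetric])
        ultimately have "norm (q i t) * \<bar>X i - l\<bar> \<le> (t ^ Suc m * exp (- b * t)) * \<bar>X i - l\<bar>"
          using Xne[of i] by (simp add: field_simps)
        moreover have "0 < \<bar>X i - l\<bar>" using Xne[of i] by simp
        ultimately show ?case by (rule mult_right_le_imp_le)
      qed
    qed
    moreover have "integral\<^sup>L nu (\<lambda>t. - (t ^ Suc m * exp (- l * t))) = - G (Suc m) l"
      by (simp add: G_def)
    ultimately show "(\<lambda>i. (G m (X i) - G m l) / (X i - l)) \<longlonglongrightarrow> - G (Suc m) l"
      by (simp only: eq)
  qed
  thus ?thesis unfolding has_field_derivative_iff at_within_open[OF lS oS] .
qed

lemma deriv_iter:
  assumes oS: "open S" and SD: "\<And>l. l \<in> S \<Longrightarrow> \<exists>a\<in>Dom. a < l"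
    and gS: "\<And>l. l \<in> S \<Longrightarrow> g l = G 0 l"
  shows "l \<in> S \<Longrightarrow> (deriv ^^ n) g l = (-1) ^ n * G n l
           \<and> ((deriv ^^ n) g has_real_derivative (-1) ^ n * - G (Suc n) l) (at l)"
proof (induction n arbitrary: l)
  have dG: "l \<in> S \<Longrightarrow> ((\<lambda>x. (-1) ^ n * G n x) has_real_derivative (-1) ^ n * - G (Suc n) l) (at l)" for n l
  proof -
    assume "l \<in> S"
    then obtain a where "a \<in> Dom" "a < l" using SD by blast
    from DERIV_cmult[OF deriv_G[OF this, of n], of "(-1)^n"] show ?thesis by simp
  qed
  {
    case 0
    have ev: "\<forall>\<^sub>F x in nhds l. g x = (-1) ^ 0 * G 0 x"
      using eventually_nhds_in_open[OF oS 0] by eventually_elim (simp add: gS)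
    show ?case using 0 gS[OF 0] DERIV_cong_ev[OF refl ev refl] dG[OF 0, of 0] by simp
  next
    case (Suc n)
    have ev: "\<forall>\<^sub>F x in nhds l. (deriv ^^ n) g x = (-1) ^ n * G n x"
      using eventually_nhds_in_open[OF oS Suc.prems] by eventually_elim (use Suc.IH in blast)
    have d1: "((deriv ^^ n) g has_real_derivative (-1) ^ n * - G (Suc n) l) (at l)"
      using Suc.IH Suc.prems by blast
    have val: "(deriv ^^ Suc n) g l = (-1) ^ Suc n * G (Suc n) l"
      using DERIV_imp_deriv[OF d1] by simp
    have ev2: "\<forall>\<^sub>F x in nhds l. (deriv ^^ Suc n) g x = (-1) ^ Suc n * G (Suc n) x"
      using eventually_nhds_in_open[OF oS Suc.prems]
    proof eventually_elim
      case (elim x)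
      have "((deriv ^^ n) g has_real_derivative (-1) ^ n * - G (Suc n) x) (at x)"
        using Suc.IH elim by blast
      from DERIV_imp_deriv[OF this] show ?case by simp
    qed
    have "((\<lambda>x. (-1) ^ Suc n * G (Suc n) x) has_real_derivative (-1) ^ Suc n * - G (Suc (Suc n)) l) (at l)"
      using dG[OF Suc.prems, of "Suc n"] .
    hence "((deriv ^^ Suc n) g has_real_derivative (-1) ^ Suc n * - G (Suc (Suc n)) l) (at l)"
      using DERIV_cong_ev[OF refl ev2 refl] by simp
    with val show ?case by simp
  }
qed

lemma expint:
  assumes im: "\<And>n. integrable nu (\<lambda>t. t ^ n)" and mu: "0 \<le> \<mu>"
  shows "(\<integral>\<^sup>+t. ennreal (exp (\<mu> * t)) \<partial>nu) = (\<Sum>n. ennreal (\<mu> ^ n / fact n * (\<integral>t. t ^ n \<partial>nu)))"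
proof -
  have "(\<integral>\<^sup>+t. ennreal (exp (\<mu> * t)) \<partial>nu) = (\<integral>\<^sup>+t. (\<Sum>n. ennreal (\<mu> ^ n / fact n * t ^ n)) \<partial>nu)"
  proof (rule nn_integral_cong)
    fix t assume "t \<in> space nu"
    hence t: "0 \<le> t" by (simp add: sp)
    have "(\<lambda>n. (\<mu> * t) ^ n / fact n) sums exp (\<mu> * t)"
      using exp_converges[of "\<mu> * t"] by (simp add: divide_inverse mult.commute)
    hence "(\<lambda>n. \<mu> ^ n / fact n * t ^ n) sums exp (\<mu> * t)"
      by (simp add: power_mult_distrib)
    hence "(\<Sum>n. ennreal (\<mu> ^ n / fact n * t ^ n)) = ennreal (exp (\<mu> * t))"
      using t mu by (subst suminf_ennreal2) (auto simp: sums_iff)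
    thus "ennreal (exp (\<mu> * t)) = (\<Sum>n. ennreal (\<mu> ^ n / fact n * t ^ n))" by simp
  qed
  also have "\<dots> = (\<Sum>n. \<integral>\<^sup>+t. ennreal (\<mu> ^ n / fact n * t ^ n) \<partial>nu)"
    by (rule nn_integral_suminf) (intro measurable_compose[OF meas] ; measurable)
  also have "\<dots> = (\<Sum>n. ennreal (\<mu> ^ n / fact n * (\<integral>t. t ^ n \<partial>nu)))"
  proof (rule suminf_cong)
    fix n
    have "(\<integral>\<^sup>+t. ennreal (\<mu> ^ n / fact n * t ^ n) \<partial>nu) = ennreal (\<integral>t. \<mu> ^ n / fact n * t ^ n \<partial>nu)"
      using AEnn mu by (intro nn_integral_eq_integral integrable_mult_right im) (auto elim!: eventually_mono)
    thus "(\<integral>\<^sup>+t. ennreal (\<mu> ^ n / fact n * t ^ n) \<partial>nu) = ennreal (\<mu> ^ n / fact n * (\<integral>t. t ^ n \<partial>nu))"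
      by simp
  qed
  finally show ?thesis .
qed

lemma moment:
  assumes pos: "\<And>l. 0 < l \<Longrightarrow> l \<in> Dom" and lim: "(G n \<longlongrightarrow> L) (at_right 0)"
  shows "integrable nu (\<lambda>t. t ^ n) \<and> (\<integral>t. t ^ n \<partial>nu) = L"
proof -
  define s where "s k = inverse (real (Suc k))" for k
  have s0: "0 < s k" for k by (simp add: s_def)
  have sl: "s \<longlonglongrightarrow> 0" unfolding s_def by (rule LIMSEQ_inverse_real_of_nat)
  have sdec: "s (Suc k) \<le> s k" for k by (simp add: s_def field_simps)
  have "filterlim s (at_right 0) sequentially"
    unfolding filterlim_at using s0 sl by (auto intro!: always_eventually simp: less_imp_neq[symmetric])
  from filterlim_compose[OF lim this] have Gl: "(\<lambda>k. G n (s k)) \<longlonglongrightarrow> L" .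
  have i: "integrable nu (\<lambda>t. t ^ n * exp (- s k * t))" for k
    using integ_pow[OF pos[of "s k / 2"], of "s k" n] s0[of k] by simp
  have inc: "AE t in nu. incseq (\<lambda>k. t ^ n * exp (- s k * t))"
    using AEnn
  proof eventually_elim
    case (elim t)
    show ?case
    proof (rule incseq_SucI)
      fix k
      have "- s k * t \<le> - s (Suc k) * t" using sdec[of k] elim by (intro mult_right_mono) auto
      thus "t ^ n * exp (- s k * t) \<le> t ^ n * exp (- s (Suc k) * t)"
        using elim by (intro mult_left_mono) auto
    qed
  qed
  have pt: "AE t in nu. (\<lambda>k. t ^ n * exp (- s k * t)) \<longlonglongrightarrow> t ^ n"
  proof (rule AE_I2)
    fix t
    have "(\<lambda>k. t ^ n * exp (- s k * t)) \<longlonglongrightarrow> t ^ n * exp (- 0 * t)"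
      by (intro tendsto_intros sl)
    thus "(\<lambda>k. t ^ n * exp (- s k * t)) \<longlonglongrightarrow> t ^ n" by simp
  qed
  have m: "(\<lambda>t. t ^ n) \<in> borel_measurable nu" by (intro meas) measurable
  have Gl': "(\<lambda>k. integral\<^sup>L nu (\<lambda>t. t ^ n * exp (- s k * t))) \<longlonglongrightarrow> L"
    using Gl by (simp add: G_def)
  show ?thesis
    using integrable_monotone_convergence[OF i inc pt Gl' m]
      integral_monotone_convergence[OF i inc pt Gl' m] by simp
qed

end


theorem lemma2p1:
  fixes f :: "real \<Rightarrow> real" and nu :: "real measure"
  assumes "completely_monotone f"
    and "representing_measure f nu"
  shows "smooth_on {lam. omega0 f < ereal lam} (ext_fun f)
    \<and> (\<forall>m::nat. \<forall>lam::real. omega0 f < ereal lam \<longrightarrow>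
          (-1) ^ m * (deriv ^^ m) (ext_fun f) lam \<ge> 0
        \<and> integrable nu (\<lambda>t. t ^ m * exp (- lam * t))
        \<and> (deriv ^^ m) (ext_fun f) lam = (-1) ^ m * (\<integral> t. t ^ m * exp (- lam * t) \<partial>nu))
    \<and> (\<forall>lam::real. omega0 f < ereal lam \<longrightarrow>
          integrable nu (\<lambda>t. exp (- lam * t)) \<and> ext_fun f lam = (\<integral> t. exp (- lam * t) \<partial>nu))"
proof -
  interpret lapl nu using assms(2) unfolding representing_measure_def by unfold_locales auto
  have rep: "\<And>l. l > 0 \<Longrightarrow> (\<integral>\<^sup>+ t. ennreal (exp (- l * t)) \<partial>nu) = ennreal (f l)"
    using assms(2) unfolding representing_measure_def by auto
  have fnn: "0 \<le> f l" if "l > 0" for l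
  proof -
    have "(-1) ^ 0 * (deriv ^^ 0) f l \<ge> 0" using assms(1) that unfolding completely_monotone_def by blast
    thus ?thesis by simp
  qed
  have posD: "l \<in> Dom" if "0 < l" for l
  proof -
    have "integrable nu (\<lambda>t. exp (- l * t))"
    proof (rule integrableI_bounded)
      show "(\<lambda>t. exp (- l * t)) \<in> borel_measurable nu" by (intro meas) measurable
      show "(\<integral>\<^sup>+ t. ennreal (norm (exp (- l * t))) \<partial>nu) < \<infinity>" using rep[OF that] by simp
    qed
    thus ?thesis by (simp add: Dom_def)
  qed
  have fG: "f l = G 0 l" if "0 < l" for l
  proof -
    have "G 0 l = (\<integral>t. exp (- l * t) \<partial>nu)" by (simp add: G_def)
    also have "\<dots> = enn2real (\<integral>\<^sup>+ t. ennreal (exp (- l * t)) \<partial>nu)"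
      by (rule integral_eq_nn_integral) (auto intro: meas)
    also have "\<dots> = f l" using rep[OF that] fnn[OF that] by simp
    finally show ?thesis by simp
  qed
  have fder: "(deriv ^^ n) f l = (-1) ^ n * G n l" if "0 < l" for n l
  proof -
    have "\<exists>a\<in>Dom. a < l" if "l \<in> {0<..}" for l
      using posD[of "l/2"] that by (intro bexI[of _ "l/2"]) auto
    from deriv_iter[of "{0<..}" f, OF _ this] fG that show ?thesis by auto
  qed
  define U where "U = {l. omega0 f < ereal l}"
  have oU: "open U" unfolding U_def by (cases "omega0 f") (auto simp flip: greaterThan_def)
  have key: "(\<exists>a\<in>Dom. a < l) \<and> ext_fun f l = G 0 l" if lU: "l \<in> U" for l
  proof (cases "0 < l")
    case True
    then show ?thesis using posD[of "l/2"] fG[OF True]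
      by (intro conjI bexI[of _ "l/2"]) (auto simp: ext_fun_def)
  next
    case False
    have allfin: "\<forall>n. deriv0_finite f n"
    proof (rule ccontr)
      assume "\<not> (\<forall>n. deriv0_finite f n)"
      hence "omega0 f = 0" unfolding omega0_def by (simp only: if_False)
      with lU False show False by (simp add: U_def)
    qed
    define M where "M n = (\<integral>t. t ^ n \<partial>nu)" for n
    have mom: "integrable nu (\<lambda>t. t ^ n) \<and> deriv0 f n = (-1) ^ n * M n" for n
    proof -
      obtain L where L: "((deriv ^^ n) f \<longlongrightarrow> L) (at_right 0)"
        using allfin deriv0_finite_def by blast
      have d0: "deriv0 f n = L" unfolding deriv0_def by (rule tendsto_Lim[OF _ L]) simp
      have ev: "\<forall>\<^sub>F x in at_right 0. (-1) ^ n * (deriv ^^ n) f x = G n x"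
        using eventually_at_right_less[of 0]
        by eventually_elim (simp add: fder mult.assoc[symmetric])
      have "(G n \<longlongrightarrow> (-1) ^ n * L) (at_right 0)"
        by (rule Lim_transform_eventually[OF tendsto_mult_left[OF L] ev])
      from moment[OF posD this] have i1: "integrable nu (\<lambda>t. t ^ n)" and M1: "M n = (-1) ^ n * L"
        by (auto simp: M_def)
      have "(-1) ^ n * M n = ((-1) ^ n * (-1) ^ n) * L" unfolding M1 by (simp only: mult.assoc)
      hence "(-1) ^ n * M n = L" by (simp only: minus_one_mult_self mult_1)
      thus ?thesis using d0 i1 by simp
    qed
    have Mnn: "0 \<le> M n" for n unfolding M_def
      using AEnn by (intro integral_nonneg_AE) (auto elim!: eventually_mono)
    have im: "integrable nu (\<lambda>t. t ^ n)" for n using mom by blast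
    have terms: "deriv0 f n / fact n * x ^ n = (-x) ^ n / fact n * M n" for x n
    proof -
      have d: "deriv0 f n = (-1) ^ n * M n" using mom[of n] by blast
      have p: "(-x) ^ n = (-1) ^ n * x ^ n" by (rule power_minus)
      show ?thesis unfolding d p by (simp add: mult_ac)
    qed
    have om: "omega0 f = Inf (ereal ` {lam. summable (\<lambda>n. deriv0 f n / fact n * lam ^ n)})"
      using allfin by (simp add: omega0_def)
    from lU obtain l' where l'S: "summable (\<lambda>n. deriv0 f n / fact n * l' ^ n)" and l'l: "l' < l"
      unfolding U_def om Inf_less_iff by auto
    have nnt: "0 \<le> (-x) ^ n / fact n * M n" if "x \<le> 0" for x n
      using that Mnn[of n] by simp
    have l'D: "l' \<in> Dom"
    proof -
      have sm: "summable (\<lambda>n. (-l') ^ n / fact n * M n)" using l'S unfolding terms .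
      have "(\<integral>\<^sup>+ t. ennreal (exp ((-l') * t)) \<partial>nu) = (\<Sum>n. ennreal ((-l') ^ n / fact n * M n))"
        using expint[OF im, of "-l'"] l'l False by (simp add: M_def)
      also have "\<dots> = ennreal (\<Sum>n. (-l') ^ n / fact n * M n)"
        using nnt[of l'] l'l False sm by (intro suminf_ennreal2) auto
      finally have fin: "(\<integral>\<^sup>+ t. ennreal (norm (exp (- l' * t))) \<partial>nu) < \<infinity>" by simp
      have "integrable nu (\<lambda>t. exp (- l' * t))"
        by (rule integrableI_bounded[OF _ fin]) (intro meas, measurable)
      thus ?thesis by (simp add: Dom_def)
    qed
    have lD: "l \<in> Dom" using integ_mono[OF l'D] l'l by simp
    have ext: "ext_fun f l = (\<Sum>n. (-l) ^ n / fact n * M n)"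
      using False unfolding ext_fun_def terms by simp
    have G0: "G 0 l = (\<integral>t. exp (- l * t) \<partial>nu)" by (simp add: G_def)
    have G0nn: "0 \<le> G 0 l" unfolding G0 by (rule integral_nonneg_AE) simp
    have "ennreal (G 0 l) = (\<integral>\<^sup>+ t. ennreal (exp (- l * t)) \<partial>nu)"
      unfolding G0 using lD by (intro nn_integral_eq_integral[symmetric]) (auto simp: Dom_def)
    also have "\<dots> = (\<Sum>n. ennreal ((-l) ^ n / fact n * M n))"
      using expint[OF im, of "-l"] False by (simp add: M_def)
    finally have e1: "ennreal (G 0 l) = (\<Sum>n. ennreal ((-l) ^ n / fact n * M n))" .
    have sm: "summable (\<lambda>n. (-l) ^ n / fact n * M n)"
      using nnt[of l] False e1[symmetric] by (intro summable_suminf_not_top) auto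
    have "(\<Sum>n. ennreal ((-l) ^ n / fact n * M n)) = ennreal (\<Sum>n. (-l) ^ n / fact n * M n)"
      using nnt[of l] False sm by (intro suminf_ennreal2) auto
    with e1 have ee: "ennreal (G 0 l) = ennreal (\<Sum>n. (-l) ^ n / fact n * M n)" by simp
    have "0 \<le> (\<Sum>n. (-l) ^ n / fact n * M n)"
      using nnt[of l] False sm by (intro suminf_nonneg) auto
    hence "G 0 l = (\<Sum>n. (-l) ^ n / fact n * M n)"
      using ee G0nn ennreal_inj by blast
    with ext show ?thesis using l'D l'l by (intro conjI bexI[of _ l']) auto
  qed
  have SD: "\<And>l. l \<in> U \<Longrightarrow> \<exists>a\<in>Dom. a < l" and gS: "\<And>l. l \<in> U \<Longrightarrow> ext_fun f l = G 0 l"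
    using key by blast+
  have di: "(deriv ^^ n) (ext_fun f) l = (-1) ^ n * G n l
           \<and> ((deriv ^^ n) (ext_fun f) has_real_derivative (-1) ^ n * - G (Suc n) l) (at l)"
    if "l \<in> U" for n l
    using deriv_iter[of U "ext_fun f" l n] oU SD gS that by blast
  have sgn: "(-1) ^ m * ((-1) ^ m * x) = (x::real)" for m x by (simp add: mult.assoc[symmetric])
  show ?thesis
  proof (intro conjI allI impI)
    show "smooth_on {lam. omega0 f < ereal lam} (ext_fun f)"
      unfolding smooth_on_def U_def[symmetric]
      using di real_differentiable_def by blast
  next
    fix m :: nat and l :: real assume "omega0 f < ereal l"
    hence lU: "l \<in> U" by (simp add: U_def)
    have Gnn: "0 \<le> G m l" unfolding G_def
      using AEnn by (intro integral_nonneg_AE) (auto elim!: eventually_mono)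
    show "(-1) ^ m * (deriv ^^ m) (ext_fun f) l \<ge> 0" using di[OF lU, of m] Gnn sgn by simp
    show "integrable nu (\<lambda>t. t ^ m * exp (- l * t))" using SD[OF lU] integ_pow by blast
    show "(deriv ^^ m) (ext_fun f) l = (-1) ^ m * (\<integral> t. t ^ m * exp (- l * t) \<partial>nu)"
      using di[OF lU, of m] by (simp add: G_def)
  next
    fix l :: real assume "omega0 f < ereal l"
    hence lU: "l \<in> U" by (simp add: U_def)
    show "integrable nu (\<lambda>t. exp (- l * t))" using SD[OF lU] integ_mono by (auto simp: Dom_def)
    show "ext_fun f l = (\<integral> t. exp (- l * t) \<partial>nu)" using gS[OF lU] by (simp add: G_def)
  qed
qed

end
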